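(* Let $\nu$ be a measure on $\mathbb{R}^d$ with $\nu(\{0\})=0$. Then $\Upsilon_{-2,2}(\nu)$ is definable if and only if $\nu\in\mathfrak{M}_L(\mathbb{R}^d)$. Moreover, the mapping $\Upsilon_{-2,2}$ is one-to-one on $\mathfrak{M}_L(\mathbb{R}^d)$.
   Context: $\mathfrak{M}_L(\mathbb{R}^d)$ is the class of Lévy measures, i.e. measures $\nu$ with $\nu(\{0\})=0$ and $\int(1\wedge|x|^2)\nu(\mathrm{d}x)<\infty$. For a measure $\nu$ on $\mathbb{R}^d$ with $\nu(\{0\})=0$, $\Upsilon_{-2,2}(\nu)(B)=\int_0^\infty\nu(s^{-1}B)\,2se^{-s^2}\mathrm{d}s$ for Borel $B$ (with $s^{-1}B=\{s^{-1}x:x\in B\}$); $\Upsilon_{-2,2}(\nu)$ is called definable when this right-hand side is a measure in $\mathfrak{M}_L(\mathbb{R}^d)$. *)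

theory Defs
  imports "HOL-Analysis.Analysis"
begin

definition levy_measure :: "'a::euclidean_space measure \<Rightarrow> bool" where
  "levy_measure \<nu> \<longleftrightarrow> sets \<nu> = sets borel \<and> emeasure \<nu> {0} = 0 \<and>
     (\<integral>\<^sup>+ x. ennreal (min 1 ((norm x)\<^sup>2)) \<partial>\<nu>) < \<infinity>"

definition upsilon :: "'a::euclidean_space measure \<Rightarrow> 'a set \<Rightarrow> ennreal" where
  "upsilon \<nu> B = (\<integral>\<^sup>+ s. indicator {0<..} s *
      emeasure \<nu> ((\<lambda>x. inverse s *\<^sub>R x) ` B) * ennreal (2 * s * exp (- (s\<^sup>2))) \<partial>lborel)"

definition upsilon_definable :: "'a::euclidean_space measure \<Rightarrow> bool" where
  "upsilon_definable \<nu> \<longleftrightarrow>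
     (\<exists>\<mu>. levy_measure \<mu> \<and> (\<forall>B\<in>sets borel. emeasure \<mu> B = upsilon \<nu> B))"

end

theory Submission
  imports Defs "HOL-Real_Asymp.Real_Asymp"
begin


lemma exp_tail_ge:
  fixes a :: real assumes "0 \<le> a"
  shows "(\<integral>\<^sup>+ t. ennreal (2*t*exp (- (t^2))) * indicator {a..} t \<partial>lborel) = ennreal (exp (- (a^2)))"
proof -
  have "(\<integral>\<^sup>+ t. ennreal (2*t*exp (- (t^2))) * indicator {a..} t \<partial>lborel) = ennreal (0 - (- exp (- (a^2))))"
  proof (rule nn_integral_FTC_atLeast[where F="\<lambda>t. - exp (- (t^2))"])
    show "(\<lambda>t::real. 2*t*exp (- (t^2))) \<in> borel_measurable borel" by measurable
    show "((\<lambda>t::real. - exp (- (t^2))) \<longlongrightarrow> 0) at_top" by real_asymp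
    fix x assume "a \<le> x"
    then show "0 \<le> 2*x*exp (- (x^2))" using assms by auto
    show "((\<lambda>t::real. - exp (- (t^2))) has_real_derivative 2*x*exp (- (x^2))) (at x)"
      by (auto intro!: derivative_eq_intros simp: power2_eq_square)
  qed
  then show ?thesis by simp
qed

lemma exp_tail_gt:
  fixes a :: real assumes "0 \<le> a"
  shows "(\<integral>\<^sup>+ t. ennreal (2*t*exp (- (t^2))) * indicator {a<..} t \<partial>lborel) = ennreal (exp (- (a^2)))"
proof -
  have "(\<integral>\<^sup>+ t. ennreal (2*t*exp (- (t^2))) * indicator {a<..} t \<partial>lborel) =
        (\<integral>\<^sup>+ t. ennreal (2*t*exp (- (t^2))) * indicator {a..} t \<partial>lborel)"
    by (rule nn_integral_cong_AE) (use AE_lborel_singleton[of a] in \<open>eventually_elim, auto split: split_indicator\<close>)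
  then show ?thesis using exp_tail_ge[OF assms] by simp
qed

lemma moment_two:
  "(\<integral>\<^sup>+ t. ennreal (2*t*exp (- (t^2))*(1+t^2)) * indicator {0..} t \<partial>lborel) = 2"
proof -
  have "(\<integral>\<^sup>+ t. ennreal (2*t*exp (- (t^2))*(1+t^2)) * indicator {0..} t \<partial>lborel) = ennreal (0 - (- (2 + 0^2) * exp (- (0^2))))"
  proof (rule nn_integral_FTC_atLeast[where F="\<lambda>t. - (2 + t^2) * exp (- (t^2))"])
    show "(\<lambda>t::real. 2*t*exp (- (t^2))*(1+t^2)) \<in> borel_measurable borel" by measurable
    show "((\<lambda>t::real. - (2 + t^2) * exp (- (t^2))) \<longlongrightarrow> 0) at_top" by real_asymp
    fix x :: real assume "0 \<le> x"
    then show "0 \<le> 2*x*exp (- (x^2))*(1+x^2)" by auto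
    show "((\<lambda>t::real. - (2 + t^2) * exp (- (t^2))) has_real_derivative 2*x*exp (- (x^2))*(1+x^2)) (at x)"
      by (auto intro!: derivative_eq_intros simp: power2_eq_square algebra_simps)
  qed
  then show ?thesis by simp
qed


definition rho :: "real \<Rightarrow> ennreal" where
  "rho t = indicator {0<..} t * ennreal (2*t*exp (- (t^2)))"

lemma rho_measurable[measurable]: "rho \<in> borel_measurable borel"
  unfolding rho_def by measurable

lemma scale_image_eq:
  fixes B :: "'a::euclidean_space set" assumes "t \<noteq> 0"
  shows "(\<lambda>x. inverse t *\<^sub>R x) ` B = (\<lambda>x. t *\<^sub>R x) -` B"
proof
  show "(\<lambda>x. inverse t *\<^sub>R x) ` B \<subseteq> (\<lambda>x. t *\<^sub>R x) -` B" using assms by auto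
  show "(\<lambda>x. t *\<^sub>R x) -` B \<subseteq> (\<lambda>x. inverse t *\<^sub>R x) ` B"
  proof
    fix x assume "x \<in> (\<lambda>x. t *\<^sub>R x) -` B"
    then show "x \<in> (\<lambda>x. inverse t *\<^sub>R x) ` B"
      using assms by (intro image_eqI[where x="t *\<^sub>R x"]) auto
  qed
qed

lemma upsilon_tonelli:
  fixes \<nu> :: "'a::euclidean_space measure"
  assumes sf: "sigma_finite_measure \<nu>" and sets: "sets \<nu> = sets borel" and B: "B \<in> sets borel"
  shows "upsilon \<nu> B = (\<integral>\<^sup>+ x. (\<integral>\<^sup>+ t. rho t * indicator B (t *\<^sub>R x) \<partial>lborel) \<partial>\<nu>)"
proof -
  interpret sigma_finite_measure \<nu> by fact
  interpret P: pair_sigma_finite lborel \<nu> ..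
  have sp: "space \<nu> = UNIV" using sets_eq_imp_space_eq[OF sets] by simp
  have meas_x: "(\<lambda>x. indicator B (t *\<^sub>R x)) \<in> borel_measurable \<nu>" for t :: real
    using B by (simp add: measurable_cong_sets[OF sets refl])
  have "upsilon \<nu> B = (\<integral>\<^sup>+ t. (\<integral>\<^sup>+ x. rho t * indicator B (t *\<^sub>R x) \<partial>\<nu>) \<partial>lborel)"
    unfolding upsilon_def
  proof (rule nn_integral_cong)
    fix t :: real
    show "indicator {0<..} t * emeasure \<nu> ((\<lambda>x. inverse t *\<^sub>R x) ` B) * ennreal (2 * t * exp (- t\<^sup>2)) =
          (\<integral>\<^sup>+ x. rho t * indicator B (t *\<^sub>R x) \<partial>\<nu>)"
    proof (cases "t > 0")
      case True
      have mB: "(\<lambda>x. t *\<^sub>R x) -` B \<in> sets \<nu>"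
      proof -
        have m: "(\<lambda>x::'a. t *\<^sub>R x) \<in> borel_measurable borel"
          by (intro borel_measurable_continuous_onI continuous_intros)
        have "(\<lambda>x. t *\<^sub>R x) -` B \<inter> space borel \<in> sets borel"
          by (rule measurable_sets[OF m B])
        then show ?thesis unfolding sets by simp
      qed
      have "(\<integral>\<^sup>+ x. rho t * indicator B (t *\<^sub>R x) \<partial>\<nu>) = rho t * (\<integral>\<^sup>+ x. indicator B (t *\<^sub>R x) \<partial>\<nu>)"
        by (rule nn_integral_cmult[OF meas_x])
      also have "(\<integral>\<^sup>+ x. indicator B (t *\<^sub>R x) \<partial>\<nu>) = (\<integral>\<^sup>+ x. indicator ((\<lambda>x. t *\<^sub>R x) -` B) x \<partial>\<nu>)"
        by (rule nn_integral_cong) (auto split: split_indicator)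
      also have "\<dots> = emeasure \<nu> ((\<lambda>x. t *\<^sub>R x) -` B)"
        using mB by simp
      finally show ?thesis using True scale_image_eq[of t B]
        by (simp add: rho_def mult.commute mult.left_commute)
    next
      case False
      then show ?thesis by (simp add: rho_def)
    qed
  qed
  also have "\<dots> = (\<integral>\<^sup>+ x. (\<integral>\<^sup>+ t. rho t * indicator B (t *\<^sub>R x) \<partial>lborel) \<partial>\<nu>)"
  proof (rule P.Fubini'[symmetric])
    have seq: "sets (lborel \<Otimes>\<^sub>M \<nu>) = sets (borel \<Otimes>\<^sub>M borel)"
      by (rule sets_pair_measure_cong) (simp_all add: sets)
    show "case_prod (\<lambda>t x. rho t * indicator B (t *\<^sub>R x)) \<in> borel_measurable (lborel \<Otimes>\<^sub>M \<nu>)"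
      unfolding measurable_cong_sets[OF seq refl] using B by measurable
  qed
  finally show ?thesis .
qed



lemma norm_scale_sq: "(norm (t *\<^sub>R (x::'a::real_normed_vector)))\<^sup>2 = t\<^sup>2 * (norm x)\<^sup>2"
  by (simp add: power_mult_distrib)

lemma min_scale_le: "0 \<le> (a::real) \<Longrightarrow> min 1 (t\<^sup>2 * a) \<le> (1 + t\<^sup>2) * min 1 a"
  by (cases "a \<le> 1") (auto simp: min_def algebra_simps intro: order_trans[of _ 1] mult_nonneg_nonneg)

lemma min_scale_ge: "1 < (t::real) \<Longrightarrow> 0 \<le> a \<Longrightarrow> min 1 a \<le> min 1 (t\<^sup>2 * a)"
proof -
  assume "1 < t" "0 \<le> a"
  then have "1 \<le> t\<^sup>2" by (simp add: one_le_power)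
  then have "a \<le> t\<^sup>2 * a" using \<open>0 \<le> a\<close> by (simp add: mult_le_cancel_right1)
  then show ?thesis by auto
qed

lemma levy_tail_finite:
  fixes \<nu> :: "'a::euclidean_space measure"
  assumes "levy_measure \<nu>" "0 < r"
  shows "emeasure \<nu> {x. r < norm x} \<noteq> \<infinity>"
proof -
  have sets: "sets \<nu> = sets borel" and fin: "(\<integral>\<^sup>+ x. ennreal (min 1 ((norm x)\<^sup>2)) \<partial>\<nu>) < \<infinity>"
    using assms(1) unfolding levy_measure_def by auto
  have mA: "{x. r < norm x} \<in> sets \<nu>" unfolding sets by measurable
  have "ennreal (min 1 (r\<^sup>2)) * emeasure \<nu> {x. r < norm x} =
        (\<integral>\<^sup>+ x. ennreal (min 1 (r\<^sup>2)) * indicator {x. r < norm x} x \<partial>\<nu>)"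
    using mA by (simp add: nn_integral_cmult_indicator)
  also have "\<dots> \<le> (\<integral>\<^sup>+ x. ennreal (min 1 ((norm x)\<^sup>2)) \<partial>\<nu>)"
  proof (rule nn_integral_mono)
    fix x :: 'a
    show "ennreal (min 1 (r\<^sup>2)) * indicator {x. r < norm x} x \<le> ennreal (min 1 ((norm x)\<^sup>2))"
    proof (cases "r < norm x")
      case True
      then have "r\<^sup>2 \<le> (norm x)\<^sup>2" using assms(2) by (intro power_mono) auto
      then show ?thesis using True by (auto intro!: ennreal_leI)
    qed simp
  qed
  finally have "ennreal (min 1 (r\<^sup>2)) * emeasure \<nu> {x. r < norm x} \<noteq> \<infinity>"
    using fin by (auto simp: top_unique)
  moreover have "0 < min 1 (r\<^sup>2)" using assms(2) by auto
  ultimately show ?thesis by (auto simp: ennreal_mult_eq_top_iff)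
qed

lemma sigma_finite_from_tails:
  fixes \<nu> :: "'a::euclidean_space measure"
  assumes sets: "sets \<nu> = sets borel" and z: "emeasure \<nu> {0} = 0"
    and tails: "\<And>r. 0 < r \<Longrightarrow> emeasure \<nu> {x. r < norm x} \<noteq> \<infinity>"
  shows "sigma_finite_measure \<nu>"
proof
  let ?A = "insert {0} (range (\<lambda>n::nat. {x::'a. 1 / Suc n < norm x}))"
  show "\<exists>A. countable A \<and> A \<subseteq> sets \<nu> \<and> \<Union> A = space \<nu> \<and> (\<forall>a\<in>A. emeasure \<nu> a \<noteq> \<infinity>)"
  proof (intro exI[of _ ?A] conjI)
    show "countable ?A" by simp
    show "?A \<subseteq> sets \<nu>" unfolding sets by auto
    show "\<Union> ?A = space \<nu>"
    proof -
      have "x \<in> \<Union> ?A" for x :: 'a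
      proof (cases "x = 0")
        case False
        then have "0 < norm x" by simp
        then obtain n where "1 / Suc n < norm x"
          by (metis add.commute inverse_eq_divide nat_approx_posE of_nat_Suc)
        then show ?thesis by auto
      qed simp
      then show ?thesis using sets_eq_imp_space_eq[OF sets] by auto
    qed
    show "\<forall>a\<in>?A. emeasure \<nu> a \<noteq> \<infinity>" using z tails by auto
  qed
qed

lemma levy_sigma_finite:
  fixes \<nu> :: "'a::euclidean_space measure"
  assumes "levy_measure \<nu>" shows "sigma_finite_measure \<nu>"
  using assms by (intro sigma_finite_from_tails levy_tail_finite) (auto simp: levy_measure_def)

definition ups_meas :: "'a::euclidean_space measure \<Rightarrow> 'a measure" where
  "ups_meas \<nu> = distr (density (lborel \<Otimes>\<^sub>M \<nu>) (\<lambda>(t,x). rho t)) borel (\<lambda>(t,x). t *\<^sub>R x)"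

lemma sets_ups_meas[simp]: "sets (ups_meas \<nu>) = sets borel"
  by (simp add: ups_meas_def)

lemma ups_meas_nn_integral:
  fixes \<nu> :: "'a::euclidean_space measure"
  assumes sf: "sigma_finite_measure \<nu>" and sets: "sets \<nu> = sets borel"
    and f[measurable]: "f \<in> borel_measurable borel"
  shows "(\<integral>\<^sup>+ y. f y \<partial>ups_meas \<nu>) = (\<integral>\<^sup>+ x. (\<integral>\<^sup>+ t. rho t * f (t *\<^sub>R x) \<partial>lborel) \<partial>\<nu>)"
proof -
  interpret sigma_finite_measure \<nu> by fact
  interpret P: pair_sigma_finite lborel \<nu> ..
  have seq: "sets (lborel \<Otimes>\<^sub>M \<nu>) = sets (borel \<Otimes>\<^sub>M borel)"
    by (rule sets_pair_measure_cong) (simp_all add: sets)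
  have m1: "(\<lambda>(t,x). t *\<^sub>R x) \<in> (lborel \<Otimes>\<^sub>M \<nu>) \<rightarrow>\<^sub>M (borel :: 'a measure)"
    unfolding measurable_cong_sets[OF seq refl] by measurable
  have m2: "(\<lambda>(t::real,x::'a). rho t) \<in> borel_measurable (lborel \<Otimes>\<^sub>M \<nu>)"
    unfolding measurable_cong_sets[OF seq refl] by measurable
  have m3: "(\<lambda>(t::real,x::'a). rho t * f (t *\<^sub>R x)) \<in> borel_measurable (lborel \<Otimes>\<^sub>M \<nu>)"
    unfolding measurable_cong_sets[OF seq refl] by measurable
  have "(\<integral>\<^sup>+ y. f y \<partial>ups_meas \<nu>) = (\<integral>\<^sup>+ p. f ((\<lambda>(t,x). t *\<^sub>R x) p) \<partial>density (lborel \<Otimes>\<^sub>M \<nu>) (\<lambda>(t,x). rho t))"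
    unfolding ups_meas_def
    by (rule nn_integral_distr) (use m1 in \<open>simp_all\<close>)
  also have "\<dots> = (\<integral>\<^sup>+ p. (\<lambda>(t,x). rho t) p * f ((\<lambda>(t,x). t *\<^sub>R x) p) \<partial>(lborel \<Otimes>\<^sub>M \<nu>))"
    by (rule nn_integral_density) (use m1 m2 in \<open>simp_all\<close>)
  also have "\<dots> = (\<integral>\<^sup>+ p. (\<lambda>(t,x). rho t * f (t *\<^sub>R x)) p \<partial>(lborel \<Otimes>\<^sub>M \<nu>))"
    by (rule nn_integral_cong) auto
  also have "\<dots> = (\<integral>\<^sup>+ x. (\<integral>\<^sup>+ t. rho t * f (t *\<^sub>R x) \<partial>lborel) \<partial>\<nu>)"
    using P.nn_integral_snd[OF m3] by simp
  finally show ?thesis .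
qed

lemma ups_meas_emeasure:
  fixes \<nu> :: "'a::euclidean_space measure"
  assumes sf: "sigma_finite_measure \<nu>" and sets: "sets \<nu> = sets borel" and B: "B \<in> sets borel"
  shows "emeasure (ups_meas \<nu>) B = upsilon \<nu> B"
proof -
  have "emeasure (ups_meas \<nu>) B = (\<integral>\<^sup>+ y. indicator B y \<partial>ups_meas \<nu>)"
    using B by simp
  also have "\<dots> = (\<integral>\<^sup>+ x. (\<integral>\<^sup>+ t. rho t * indicator B (t *\<^sub>R x) \<partial>lborel) \<partial>\<nu>)"
    by (rule ups_meas_nn_integral[OF sf sets]) (use B in simp)
  also have "\<dots> = upsilon \<nu> B"
    by (rule upsilon_tonelli[OF sf sets B, symmetric])
  finally show ?thesis .
qed



lemma rho_moment_two: "(\<integral>\<^sup>+ t. rho t * ennreal (1 + t\<^sup>2) \<partial>lborel) = 2"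
proof -
  have "(\<integral>\<^sup>+ t. rho t * ennreal (1 + t\<^sup>2) \<partial>lborel) =
        (\<integral>\<^sup>+ t. ennreal (2*t*exp (- (t^2))*(1+t^2)) * indicator {0..} t \<partial>lborel)"
  proof (rule nn_integral_cong)
    fix t :: real
    show "rho t * ennreal (1 + t\<^sup>2) = ennreal (2*t*exp (- (t^2))*(1+t^2)) * indicator {0..} t"
    proof (cases "0 < t")
      case True
      then have "rho t * ennreal (1 + t\<^sup>2) = ennreal (2*t*exp (- (t^2))) * ennreal (1 + t\<^sup>2)"
        by (simp add: rho_def)
      also have "\<dots> = ennreal (2*t*exp (- (t^2))*(1+t^2))"
        by (rule ennreal_mult[symmetric]) (use True in auto)
      finally show ?thesis using True by simp
    next
      case False
      then show ?thesis by (cases "t = 0") (auto simp: rho_def)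
    qed
  qed
  then show ?thesis using moment_two by simp
qed

lemma rho_tail: "0 \<le> a \<Longrightarrow> (\<integral>\<^sup>+ t. rho t * indicator {a<..} t \<partial>lborel) = ennreal (exp (- (a^2)))"
proof -
  assume a: "0 \<le> a"
  have "(\<integral>\<^sup>+ t. rho t * indicator {a<..} t \<partial>lborel) =
        (\<integral>\<^sup>+ t. ennreal (2*t*exp (- (t^2))) * indicator {a<..} t \<partial>lborel)"
    by (rule nn_integral_cong) (use a in \<open>auto simp: rho_def split: split_indicator\<close>)
  then show ?thesis using exp_tail_gt[OF a] by simp
qed

lemma levy_imp_ups_levy:
  fixes \<nu> :: "'a::euclidean_space measure"
  assumes L: "levy_measure \<nu>"
  shows "levy_measure (ups_meas \<nu>)"
proof -
  have sets: "sets \<nu> = sets borel" and z: "emeasure \<nu> {0} = 0"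
    and fin: "(\<integral>\<^sup>+ x. ennreal (min 1 ((norm x)\<^sup>2)) \<partial>\<nu>) < \<infinity>"
    using L unfolding levy_measure_def by auto
  have sf: "sigma_finite_measure \<nu>" by (rule levy_sigma_finite[OF L])
  have "emeasure (ups_meas \<nu>) {0} = upsilon \<nu> {0}"
    by (rule ups_meas_emeasure[OF sf sets]) simp
  also have "\<dots> = 0" unfolding upsilon_def using z by simp
  finally have z': "emeasure (ups_meas \<nu>) {0} = 0" .
  have "(\<integral>\<^sup>+ y. ennreal (min 1 ((norm y)\<^sup>2)) \<partial>ups_meas \<nu>) =
        (\<integral>\<^sup>+ x. (\<integral>\<^sup>+ t. rho t * ennreal (min 1 ((norm (t *\<^sub>R x))\<^sup>2)) \<partial>lborel) \<partial>\<nu>)"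
    by (rule ups_meas_nn_integral[OF sf sets]) measurable
  also have "\<dots> \<le> (\<integral>\<^sup>+ x. (\<integral>\<^sup>+ t. (rho t * ennreal (1 + t\<^sup>2)) * ennreal (min 1 ((norm x)\<^sup>2)) \<partial>lborel) \<partial>\<nu>)"
  proof (intro nn_integral_mono)
    fix x :: 'a and t :: real
    have "ennreal (min 1 ((norm (t *\<^sub>R x))\<^sup>2)) \<le> ennreal (1 + t\<^sup>2) * ennreal (min 1 ((norm x)\<^sup>2))"
      unfolding norm_scale_sq ennreal_mult[symmetric, OF _ ] 
      by (subst ennreal_mult[symmetric]) (auto intro!: ennreal_leI min_scale_le)
    then show "rho t * ennreal (min 1 ((norm (t *\<^sub>R x))\<^sup>2)) \<le> rho t * ennreal (1 + t\<^sup>2) * ennreal (min 1 ((norm x)\<^sup>2))"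
      by (simp add: mult.assoc mult_left_mono)
  qed
  also have "\<dots> = (\<integral>\<^sup>+ x. 2 * ennreal (min 1 ((norm x)\<^sup>2)) \<partial>\<nu>)"
  proof (rule nn_integral_cong)
    fix x :: 'a
    have "(\<integral>\<^sup>+ t. rho t * ennreal (1 + t\<^sup>2) * ennreal (min 1 ((norm x)\<^sup>2)) \<partial>lborel) =
       (\<integral>\<^sup>+ t. rho t * ennreal (1 + t\<^sup>2) \<partial>lborel) * ennreal (min 1 ((norm x)\<^sup>2))"
      by (rule nn_integral_multc) measurable
    then show "(\<integral>\<^sup>+ t. rho t * ennreal (1 + t\<^sup>2) * ennreal (min 1 ((norm x)\<^sup>2)) \<partial>lborel) =
       2 * ennreal (min 1 ((norm x)\<^sup>2))"
      unfolding rho_moment_two .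
  qed
  also have "\<dots> = 2 * (\<integral>\<^sup>+ x. ennreal (min 1 ((norm x)\<^sup>2)) \<partial>\<nu>)"
    by (rule nn_integral_cmult) (simp add: sets measurable_cong_sets[OF sets refl])
  also have "\<dots> < \<infinity>" using fin by (simp add: ennreal_mult_less_top)
  finally show ?thesis unfolding levy_measure_def using z' by simp
qed

lemma ups_lower:
  fixes \<nu> :: "'a::euclidean_space measure"
  assumes sf: "sigma_finite_measure \<nu>" and sets: "sets \<nu> = sets borel"
  shows "ennreal (exp (-1)) * (\<integral>\<^sup>+ x. ennreal (min 1 ((norm x)\<^sup>2)) \<partial>\<nu>) \<le>
         (\<integral>\<^sup>+ y. ennreal (min 1 ((norm y)\<^sup>2)) \<partial>ups_meas \<nu>)"
proof -
  have "ennreal (exp (-1)) * (\<integral>\<^sup>+ x. ennreal (min 1 ((norm x)\<^sup>2)) \<partial>\<nu>) =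
        (\<integral>\<^sup>+ x. ennreal (exp (-1)) * ennreal (min 1 ((norm x)\<^sup>2)) \<partial>\<nu>)"
    by (rule nn_integral_cmult[symmetric]) (simp add: measurable_cong_sets[OF sets refl])
  also have "\<dots> = (\<integral>\<^sup>+ x. (\<integral>\<^sup>+ t. (rho t * indicator {1<..} t) * ennreal (min 1 ((norm x)\<^sup>2)) \<partial>lborel) \<partial>\<nu>)"
    by (rule nn_integral_cong) (simp add: nn_integral_multc rho_tail)
  also have "\<dots> \<le> (\<integral>\<^sup>+ x. (\<integral>\<^sup>+ t. rho t * ennreal (min 1 ((norm (t *\<^sub>R x))\<^sup>2)) \<partial>lborel) \<partial>\<nu>)"
  proof (intro nn_integral_mono)
    fix x :: 'a and t :: real
    show "rho t * indicator {1<..} t * ennreal (min 1 ((norm x)\<^sup>2)) \<le> rho t * ennreal (min 1 ((norm (t *\<^sub>R x))\<^sup>2))"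
    proof (cases "1 < t")
      case True
      then have "ennreal (min 1 ((norm x)\<^sup>2)) \<le> ennreal (min 1 ((norm (t *\<^sub>R x))\<^sup>2))"
        unfolding norm_scale_sq by (intro ennreal_leI min_scale_ge) auto
      then show ?thesis using True by (simp add: mult_left_mono)
    qed simp
  qed
  also have "\<dots> = (\<integral>\<^sup>+ y. ennreal (min 1 ((norm y)\<^sup>2)) \<partial>ups_meas \<nu>)"
    by (rule ups_meas_nn_integral[OF sf sets, symmetric]) measurable
  finally show ?thesis .
qed

lemma definable_tail:
  fixes \<nu> :: "'a::euclidean_space measure"
  assumes sets: "sets \<nu> = sets borel" and fin: "upsilon \<nu> {y. 1 < norm y} \<noteq> \<infinity>" and r: "0 < r"
  shows "emeasure \<nu> {x. r < norm x} \<noteq> \<infinity>"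
proof -
  let ?A = "{x::'a. r < norm x}"
  have "(\<integral>\<^sup>+ t. emeasure \<nu> ?A * (ennreal (2*t*exp (- (t^2))) * indicator {1/r<..} t) \<partial>lborel)
        \<le> upsilon \<nu> {y. 1 < norm y}"
    unfolding upsilon_def
  proof (rule nn_integral_mono)
    fix t :: real
    show "emeasure \<nu> ?A * (ennreal (2*t*exp (- (t^2))) * indicator {1/r<..} t)
      \<le> indicator {0<..} t * emeasure \<nu> ((\<lambda>x. inverse t *\<^sub>R x) ` {y. 1 < norm y}) * ennreal (2 * t * exp (- t\<^sup>2))"
    proof (cases "1/r < t")
      case True
      then have t: "0 < t" using r by (meson less_trans zero_less_divide_1_iff)
      have "?A \<subseteq> (\<lambda>x. inverse t *\<^sub>R x) ` {y. 1 < norm y}"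
      proof
        fix x assume "x \<in> ?A"
        then have "r < norm x" by simp
        have "1 < t * r" using True r by (simp add: field_simps)
        also have "\<dots> \<le> t * norm x" using \<open>r < norm x\<close> t by simp
        finally have "1 < norm (t *\<^sub>R x)" using t by simp
        then show "x \<in> (\<lambda>x. inverse t *\<^sub>R x) ` {y. 1 < norm y}"
          using t by (intro image_eqI[where x="t *\<^sub>R x"]) auto
      qed
      have img: "(\<lambda>x. inverse t *\<^sub>R x) ` {y. 1 < norm y} = {x::'a. 1 < norm (t *\<^sub>R x)}"
        using scale_image_eq[of t "{y::'a. 1 < norm y}"] t by auto
      have "{x::'a. 1 < norm (t *\<^sub>R x)} \<in> sets \<nu>" unfolding sets by measurable
      then have "emeasure \<nu> ?A \<le> emeasure \<nu> ((\<lambda>x. inverse t *\<^sub>R x) ` {y. 1 < norm y})"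
        unfolding img by (rule emeasure_mono[rotated]) (use \<open>?A \<subseteq> _\<close> img in simp)
      then show ?thesis using True t by (simp add: mult_right_mono mult.commute)
    qed simp
  qed
  moreover have "(\<integral>\<^sup>+ t. emeasure \<nu> ?A * (ennreal (2*t*exp (- (t^2))) * indicator {1/r<..} t) \<partial>lborel)
     = emeasure \<nu> ?A * ennreal (exp (- ((1/r)^2)))"
    by (subst nn_integral_cmult) (use exp_tail_gt[of "1/r"] r in auto)
  ultimately have "emeasure \<nu> ?A * ennreal (exp (- ((1/r)^2))) \<noteq> \<infinity>"
    using fin by (auto simp: top_unique)
  then show ?thesis by (auto simp: ennreal_mult_eq_top_iff)
qed

lemma part1:
  fixes \<nu> :: "'a::euclidean_space measure"
  assumes sets: "sets \<nu> = sets borel" and z: "emeasure \<nu> {0} = 0"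
  shows "upsilon_definable \<nu> \<longleftrightarrow> levy_measure \<nu>"
proof
  assume L: "levy_measure \<nu>"
  have sf: "sigma_finite_measure \<nu>" by (rule levy_sigma_finite[OF L])
  show "upsilon_definable \<nu>" unfolding upsilon_definable_def
    using levy_imp_ups_levy[OF L] ups_meas_emeasure[OF sf sets] by blast
next
  assume "upsilon_definable \<nu>"
  then obtain \<mu> where L\<mu>: "levy_measure \<mu>" and eq: "\<And>B. B \<in> sets borel \<Longrightarrow> emeasure \<mu> B = upsilon \<nu> B"
    unfolding upsilon_definable_def by blast
  have fin1: "upsilon \<nu> {y. 1 < norm y} \<noteq> \<infinity>"
    using levy_tail_finite[OF L\<mu>, of 1] eq[of "{y. 1 < norm y}"] by simp
  have sf: "sigma_finite_measure \<nu>"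
    by (rule sigma_finite_from_tails[OF sets z definable_tail[OF sets fin1]])
  have \<mu>eq: "\<mu> = ups_meas \<nu>"
  proof (rule measure_eqI)
    show "sets \<mu> = sets (ups_meas \<nu>)" using L\<mu> by (simp add: levy_measure_def)
    fix B assume "B \<in> sets \<mu>"
    then have B: "B \<in> sets borel" using L\<mu> by (simp add: levy_measure_def)
    show "emeasure \<mu> B = emeasure (ups_meas \<nu>) B" using eq[OF B] ups_meas_emeasure[OF sf sets B] by simp
  qed
  have "(\<integral>\<^sup>+ y. ennreal (min 1 ((norm y)\<^sup>2)) \<partial>ups_meas \<nu>) < \<infinity>"
    using L\<mu> \<mu>eq by (simp add: levy_measure_def)
  then have "ennreal (exp (-1)) * (\<integral>\<^sup>+ x. ennreal (min 1 ((norm x)\<^sup>2)) \<partial>\<nu>) < \<infinity>"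
    using ups_lower[OF sf sets] by (rule le_less_trans[rotated])
  then have "(\<integral>\<^sup>+ x. ennreal (min 1 ((norm x)\<^sup>2)) \<partial>\<nu>) < \<infinity>"
    by (auto simp: ennreal_mult_less_top top.not_eq_extremum)
  then show "levy_measure \<nu>" unfolding levy_measure_def using sets z by simp
qed



lemma eps_zero:
  fixes d C :: real
  assumes "C \<ge> 0" and "\<And>e. e > 0 \<Longrightarrow> \<bar>d\<bar> \<le> e * C"
  shows "d = 0"
proof (rule ccontr)
  assume "d \<noteq> 0"
  then have "\<bar>d\<bar> > 0" by simp
  then have "\<bar>d\<bar> \<le> (\<bar>d\<bar> / (C + 1)) * C" using assms by (intro assms(2)) (simp add: add_nonneg_pos)
  also have "\<dots> < \<bar>d\<bar>" using \<open>\<bar>d\<bar> > 0\<close> assms(1) by (simp add: field_simps)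
  finally show False by simp
qed

locale two_meas =
  fixes p1 p2 :: "real measure"
  assumes sets1: "sets p1 = sets borel" and sets2: "sets p2 = sets borel"
    and fin1: "finite_measure p1" and fin2: "finite_measure p2"
    and supp1: "emeasure p1 (- {0..1}) = 0" and supp2: "emeasure p2 (- {0..1}) = 0"
    and mom: "\<And>k::nat. (\<integral>\<^sup>+ y. ennreal (y^k) \<partial>p1) = (\<integral>\<^sup>+ y. ennreal (y^k) \<partial>p2)"
begin

lemma space1[simp]: "space p1 = UNIV" using sets_eq_imp_space_eq[OF sets1] by simp
lemma space2[simp]: "space p2 = UNIV" using sets_eq_imp_space_eq[OF sets2] by simp

lemma meas1: "(f::real \<Rightarrow> 'b::topological_space) \<in> borel_measurable p1 \<longleftrightarrow> f \<in> borel_measurable borel"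
  by (simp add: measurable_cong_sets[OF sets1 refl])
lemma meas2: "(f::real \<Rightarrow> 'b::topological_space) \<in> borel_measurable p2 \<longleftrightarrow> f \<in> borel_measurable borel"
  by (simp add: measurable_cong_sets[OF sets2 refl])

lemma AE1: "AE y in p1. y \<in> {0..1}"
  by (rule AE_I[where N="- {0..1}"]) (auto simp: supp1 sets1)
lemma AE2: "AE y in p2. y \<in> {0..1}"
  by (rule AE_I[where N="- {0..1}"]) (auto simp: supp2 sets2)

lemma integrable1: "(f::real\<Rightarrow>real) \<in> borel_measurable borel \<Longrightarrow> (\<And>y. y \<in> {0..1} \<Longrightarrow> \<bar>f y\<bar> \<le> B) \<Longrightarrow>
   integrable p1 (\<lambda>y. f y * indicator {0..1} y)"
proof -
  assume a: "f \<in> borel_measurable borel" "\<And>y. y \<in> {0..1} \<Longrightarrow> \<bar>f y\<bar> \<le> B"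
  have "0 \<le> B" using a(2)[of 0] by auto
  moreover have "(\<lambda>y. f y * indicator {0..1} y) \<in> borel_measurable borel" using a(1) by measurable
  ultimately show ?thesis
    by (intro finite_measure.integrable_const_bound[OF fin1, where B=B]) (auto simp: meas1 a split: split_indicator)
qed
lemma integrable2: "(f::real\<Rightarrow>real) \<in> borel_measurable borel \<Longrightarrow> (\<And>y. y \<in> {0..1} \<Longrightarrow> \<bar>f y\<bar> \<le> B) \<Longrightarrow>
   integrable p2 (\<lambda>y. f y * indicator {0..1} y)"
proof -
  assume a: "f \<in> borel_measurable borel" "\<And>y. y \<in> {0..1} \<Longrightarrow> \<bar>f y\<bar> \<le> B"
  have "0 \<le> B" using a(2)[of 0] by auto
  moreover have "(\<lambda>y. f y * indicator {0..1} y) \<in> borel_measurable borel" using a(1) by measurable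
  ultimately show ?thesis
    by (intro finite_measure.integrable_const_bound[OF fin2, where B=B]) (auto simp: meas2 a split: split_indicator)
qed

lemma mom_int: "(\<integral>y. y^k * indicator {0..1} y \<partial>p1) = (\<integral>y. y^k * indicator {0..1} y \<partial>p2)"
proof -
  have "(\<integral>\<^sup>+ y. ennreal (y^k * indicator {0..1} y) \<partial>p1) = (\<integral>\<^sup>+ y. ennreal (y^k) \<partial>p1)"
    by (rule nn_integral_cong_AE) (use AE1 in \<open>eventually_elim, auto\<close>)
  moreover have "(\<integral>\<^sup>+ y. ennreal (y^k * indicator {0..1} y) \<partial>p2) = (\<integral>\<^sup>+ y. ennreal (y^k) \<partial>p2)"
    by (rule nn_integral_cong_AE) (use AE2 in \<open>eventually_elim, auto\<close>)
  moreover have "(\<integral>y. y^k * indicator {0..1} y \<partial>p1) = enn2real (\<integral>\<^sup>+ y. ennreal (y^k * indicator {0..1} y) \<partial>p1)"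
    by (rule integral_eq_nn_integral) (auto simp: meas1 split: split_indicator)
  moreover have "(\<integral>y. y^k * indicator {0..1} y \<partial>p2) = enn2real (\<integral>\<^sup>+ y. ennreal (y^k * indicator {0..1} y) \<partial>p2)"
    by (rule integral_eq_nn_integral) (auto simp: meas2 split: split_indicator)
  ultimately show ?thesis using mom[of k] by simp
qed

lemma poly_int: "(\<integral>y. (\<Sum>i\<le>n. a i * y^i) * indicator {0..1} y \<partial>p1) = (\<integral>y. (\<Sum>i\<le>n. a i * y^i) * indicator {0..1} y \<partial>p2)"
proof -
  have int1: "integrable p1 (\<lambda>y. y^i * indicator {0..1} y)" for i
    by (rule integrable1[where B=1]) (auto simp: power_le_one)
  have int2: "integrable p2 (\<lambda>y. y^i * indicator {0..1} y)" for i
    by (rule integrable2[where B=1]) (auto simp: power_le_one)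
  have "(\<integral>y. (\<Sum>i\<le>n. a i * y^i) * indicator {0..1} y \<partial>p1) = (\<integral>y. (\<Sum>i\<le>n. a i * (y^i * indicator {0..1} y)) \<partial>p1)"
    by (simp add: sum_distrib_right mult.assoc)
  also have "\<dots> = (\<Sum>i\<le>n. a i * (\<integral>y. y^i * indicator {0..1} y \<partial>p1))"
    by (simp add: int1)
  also have "\<dots> = (\<Sum>i\<le>n. a i * (\<integral>y. y^i * indicator {0..1} y \<partial>p2))"
    by (simp add: mom_int)
  also have "\<dots> = (\<integral>y. (\<Sum>i\<le>n. a i * (y^i * indicator {0..1} y)) \<partial>p2)"
    by (simp add: int2)
  also have "\<dots> = (\<integral>y. (\<Sum>i\<le>n. a i * y^i) * indicator {0..1} y \<partial>p2)"
    by (simp add: sum_distrib_right mult.assoc)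
  finally show ?thesis .
qed

lemma cont_int:
  fixes f :: "real \<Rightarrow> real"
  assumes cf: "continuous_on UNIV f"
  shows "(\<integral>y. f y * indicator {0..1} y \<partial>p1) = (\<integral>y. f y * indicator {0..1} y \<partial>p2)"
proof -
  have fm[measurable]: "f \<in> borel_measurable borel" using cf by (rule borel_measurable_continuous_onI)
  let ?C = "measure p1 UNIV + measure p2 UNIV"
  obtain B where B: "\<And>y. y \<in> {0..1} \<Longrightarrow> \<bar>f y\<bar> \<le> B"
  proof -
    have "compact (f ` {0..1})" by (rule compact_continuous_image) (use cf in \<open>auto intro: continuous_on_subset\<close>)
    then obtain B where "\<forall>x\<in>f ` {0..1}. norm x \<le> B" using compact_imp_bounded bounded_iff by metis
    then show ?thesis by (intro that[of B]) auto
  qed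
  have "(\<integral>y. f y * indicator {0..1} y \<partial>p1) - (\<integral>y. f y * indicator {0..1} y \<partial>p2) = 0"
  proof (rule eps_zero[where C="?C"])
    show "0 \<le> ?C" by simp
    fix e :: real assume e: "0 < e"
    obtain g where g: "real_polynomial_function g" and fg: "\<And>x. x \<in> {0..1} \<Longrightarrow> \<bar>f x - g x\<bar> < e"
      using Stone_Weierstrass_real_polynomial_function[of "{0..1::real}" f e] cf e
      by (auto intro: continuous_on_subset)
    obtain a n where gdef: "g = (\<lambda>x. \<Sum>i\<le>n. a i * x^i)" using g real_polynomial_function_iff_sum by auto
    have gm[measurable]: "g \<in> borel_measurable borel" unfolding gdef by measurable
    have Bg: "\<bar>g y\<bar> \<le> B + e" if "y \<in> {0..1}" for y using fg[OF that] B[OF that] by linarith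
    have Bd: "\<bar>f y - g y\<bar> \<le> e" if "y \<in> {0..1}" for y using fg[OF that] by linarith
    have gi: "(\<integral>y. g y * indicator {0..1} y \<partial>p1) = (\<integral>y. g y * indicator {0..1} y \<partial>p2)"
      unfolding gdef by (rule poly_int)
    have if1: "integrable p1 (\<lambda>y. f y * indicator {0..1} y)" using fm B by (rule integrable1)
    have if2: "integrable p2 (\<lambda>y. f y * indicator {0..1} y)" using fm B by (rule integrable2)
    have ig1: "integrable p1 (\<lambda>y. g y * indicator {0..1} y)" using gm Bg by (rule integrable1)
    have ig2: "integrable p2 (\<lambda>y. g y * indicator {0..1} y)" using gm Bg by (rule integrable2)
    have e0: "0 \<le> e" using e by simp
    have dm: "(\<lambda>y. f y - g y) \<in> borel_measurable borel" by measurable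
    have id1: "integrable p1 (\<lambda>y. (f y - g y) * indicator {0..1} y)" using dm Bd by (rule integrable1)
    have id2: "integrable p2 (\<lambda>y. (f y - g y) * indicator {0..1} y)" using dm Bd by (rule integrable2)
    have bnd1: "\<bar>(\<integral>y. f y * indicator {0..1} y \<partial>p1) - (\<integral>y. g y * indicator {0..1} y \<partial>p1)\<bar> \<le> e * measure p1 UNIV"
    proof -
      have "(\<integral>y. f y * indicator {0..1} y \<partial>p1) - (\<integral>y. g y * indicator {0..1} y \<partial>p1) =
            (\<integral>y. (f y - g y) * indicator {0..1} y \<partial>p1)"
        unfolding left_diff_distrib using Bochner_Integration.integral_diff[OF if1 ig1] by simp
      also have "\<bar>\<dots>\<bar> \<le> (\<integral>y. e \<partial>p1)"
        by (rule integral_abs_bound_integral) (auto intro!: id1 Bd finite_measure.integrable_const[OF fin1] simp: e0 split: split_indicator)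
      finally show ?thesis by (simp add: mult.commute)
    qed
    have bnd2: "\<bar>(\<integral>y. f y * indicator {0..1} y \<partial>p2) - (\<integral>y. g y * indicator {0..1} y \<partial>p2)\<bar> \<le> e * measure p2 UNIV"
    proof -
      have "(\<integral>y. f y * indicator {0..1} y \<partial>p2) - (\<integral>y. g y * indicator {0..1} y \<partial>p2) =
            (\<integral>y. (f y - g y) * indicator {0..1} y \<partial>p2)"
        unfolding left_diff_distrib using Bochner_Integration.integral_diff[OF if2 ig2] by simp
      also have "\<bar>\<dots>\<bar> \<le> (\<integral>y. e \<partial>p2)"
        by (rule integral_abs_bound_integral) (auto intro!: id2 Bd finite_measure.integrable_const[OF fin2] simp: e0 split: split_indicator)
      finally show ?thesis by (simp add: mult.commute)
    qed
    show "\<bar>(\<integral>y. f y * indicator {0..1} y \<partial>p1) - (\<integral>y. f y * indicator {0..1} y \<partial>p2)\<bar> \<le> e * ?C"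
      using bnd1 bnd2 gi by (simp add: distrib_left)
  qed
  then show ?thesis by simp
qed


lemma atMost_eq: "emeasure p1 {..a} = emeasure p2 {..a}"
proof -
  define fn where "fn n y = max 0 (min 1 (1 - real n * (y - a)))" for n :: nat and y :: real
  have cont: "continuous_on UNIV (fn n)" for n unfolding fn_def by (intro continuous_intros)
  have fnm[measurable]: "fn n \<in> borel_measurable borel" for n by (rule borel_measurable_continuous_onI[OF cont])
  have lim: "(\<lambda>n. fn n y * indicator {0..1} y) \<longlonglongrightarrow> indicator {..a} y * indicator {0..1} y" for y
  proof (cases "y \<le> a")
    case True
    then have "fn n y = 1" for n unfolding fn_def by (auto simp: mult_nonneg_nonpos)
    then show ?thesis using True by simp
  next
    case False
    obtain N :: nat where N: "1 / (y - a) \<le> real N" using real_arch_simple by blast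
    have "fn n y = 0" if "n \<ge> N" for n
    proof -
      have "1 / (y - a) \<le> real n" using N that by (meson of_nat_le_iff order_trans)
      then have "1 \<le> real n * (y - a)" using False by (simp add: field_simps)
      then show ?thesis unfolding fn_def by simp
    qed
    then have "eventually (\<lambda>n. fn n y * indicator {0..1} y = indicator {..a} y * indicator {0..1} y) sequentially"
      using False by (auto intro!: eventually_sequentiallyI[of N])
    then show ?thesis by (rule tendsto_eventually)
  qed
  have bnd: "\<bar>fn n y * indicator {0..1} y\<bar> \<le> 1" for n y
  proof -
    have "0 \<le> fn n y" "fn n y \<le> 1" unfolding fn_def by simp_all
    then show ?thesis by (cases "y \<in> {0..1}") simp_all
  qed
  have L1: "(\<lambda>n. \<integral>y. fn n y * indicator {0..1} y \<partial>p1) \<longlonglongrightarrow> (\<integral>y. (indicator {..a} y * indicator {0..1} y :: real) \<partial>p1)"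
  proof (rule integral_dominated_convergence[where w="\<lambda>_. 1"])
    show "(\<lambda>y. indicator {..a} y * indicator {0..1} y :: real) \<in> borel_measurable p1" unfolding meas1 by measurable
    show "(\<lambda>y. fn n y * indicator {0..1} y) \<in> borel_measurable p1" for n unfolding meas1 by measurable
    show "integrable p1 (\<lambda>_. 1::real)" by (rule finite_measure.integrable_const[OF fin1])
    show "AE y in p1. (\<lambda>n. fn n y * indicator {0..1} y) \<longlonglongrightarrow> indicator {..a} y * indicator {0..1} y"
      by (rule AE_I2) (rule lim)
    show "AE y in p1. norm (fn n y * indicator {0..1} y) \<le> 1" for n
      by (rule AE_I2) (use bnd in simp)
  qed
  have L2: "(\<lambda>n. \<integral>y. fn n y * indicator {0..1} y \<partial>p2) \<longlonglongrightarrow> (\<integral>y. (indicator {..a} y * indicator {0..1} y :: real) \<partial>p2)"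
  proof (rule integral_dominated_convergence[where w="\<lambda>_. 1"])
    show "(\<lambda>y. indicator {..a} y * indicator {0..1} y :: real) \<in> borel_measurable p2" unfolding meas2 by measurable
    show "(\<lambda>y. fn n y * indicator {0..1} y) \<in> borel_measurable p2" for n unfolding meas2 by measurable
    show "integrable p2 (\<lambda>_. 1::real)" by (rule finite_measure.integrable_const[OF fin2])
    show "AE y in p2. (\<lambda>n. fn n y * indicator {0..1} y) \<longlonglongrightarrow> indicator {..a} y * indicator {0..1} y"
      by (rule AE_I2) (rule lim)
    show "AE y in p2. norm (fn n y * indicator {0..1} y) \<le> 1" for n
      by (rule AE_I2) (use bnd in simp)
  qed
  have "(\<lambda>n. \<integral>y. fn n y * indicator {0..1} y \<partial>p1) = (\<lambda>n. \<integral>y. fn n y * indicator {0..1} y \<partial>p2)"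
    by (rule ext) (rule cont_int[OF cont])
  with L1 have L1': "(\<lambda>n. \<integral>y. fn n y * indicator {0..1} y \<partial>p2) \<longlonglongrightarrow> (\<integral>y. (indicator {..a} y * indicator {0..1} y :: real) \<partial>p1)"
    by simp
  have I: "(\<integral>y. (indicator {..a} y * indicator {0..1} y :: real) \<partial>p1) = (\<integral>y. (indicator {..a} y * indicator {0..1} y :: real) \<partial>p2)"
    by (rule LIMSEQ_unique[OF L1' L2])
  have ind: "(\<lambda>y. indicator {..a} y * indicator {0..1} y) = (indicator ({..a} \<inter> {0..1}) :: real \<Rightarrow> real)"
    by (intro ext) (simp only: indicator_inter_arith)
  have m1: "measure p1 ({..a} \<inter> {0..1}) = measure p2 ({..a} \<inter> {0..1})"
    using I unfolding ind
    by (simp add: integral_indicator sets1 sets2 finite_measure.emeasure_finite[OF fin1] finite_measure.emeasure_finite[OF fin2])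
  have split: "{..a} = ({..a} \<inter> {0..1}) \<union> ({..a} - {0..1})" by auto
  have n1: "{..a} - {0..1} \<in> null_sets p1"
    by (rule null_sets_subset[of "- {0..1}"]) (auto simp: null_sets_def sets1 supp1)
  have n2: "{..a} - {0..1} \<in> null_sets p2"
    by (rule null_sets_subset[of "- {0..1}"]) (auto simp: null_sets_def sets2 supp2)
  have "emeasure p1 {..a} = emeasure p1 ({..a} \<inter> {0..1})"
    by (subst split, rule emeasure_Un_null_set) (auto simp: sets1 n1)
  also have "\<dots> = emeasure p2 ({..a} \<inter> {0..1})"
    using m1 by (simp add: finite_measure.emeasure_eq_measure[OF fin1] finite_measure.emeasure_eq_measure[OF fin2])
  also have "\<dots> = emeasure p2 {..a}"
    by (subst (2) split, rule emeasure_Un_null_set[symmetric]) (auto simp: sets2 n2)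
  finally show ?thesis .
qed

lemma eq: "p1 = p2"
proof (rule measure_eqI_generator_eq[where E="range atMost" and \<Omega>=UNIV and A="\<lambda>i. {..real i}"])
  show "Int_stable (range atMost :: real set set)"
    by (auto simp: Int_stable_def intro: exI[of _ "min _ _"])
  show "range atMost \<subseteq> Pow (UNIV :: real set)" by simp
  fix X assume "X \<in> range (atMost :: real \<Rightarrow> _)"
  then show "emeasure p1 X = emeasure p2 X" using atMost_eq by auto
next
  have "sets (borel :: real measure) = sigma_sets UNIV (range atMost)"
    by (subst borel_eq_atMost) (simp add: sets_measure_of)
  then show "sets p1 = sigma_sets UNIV (range atMost)" "sets p2 = sigma_sets UNIV (range atMost)"
    using sets1 sets2 by simp_all
  show "range (\<lambda>i. {..real i}) \<subseteq> range atMost" by auto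
  show "(\<Union>i. {..real i}) = (UNIV :: real set)" using real_arch_simple by auto
  show "emeasure p1 {..real i} \<noteq> \<infinity>" for i using finite_measure.emeasure_finite[OF fin1] by simp
qed

end

lemma moment_unique:
  fixes p1 p2 :: "real measure"
  assumes "sets p1 = sets borel" "sets p2 = sets borel" "finite_measure p1" "finite_measure p2"
    "emeasure p1 (- {0..1}) = 0" "emeasure p2 (- {0..1}) = 0"
    "\<And>k::nat. (\<integral>\<^sup>+ y. ennreal (y^k) \<partial>p1) = (\<integral>\<^sup>+ y. ennreal (y^k) \<partial>p2)"
  shows "p1 = p2"
  by (rule two_meas.eq[OF two_meas.intro]) (rule assms)+



definition gfun :: "'a::real_normed_vector \<Rightarrow> real" where
  "gfun x = exp (- (1 / (norm x)\<^sup>2))"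

definition conev :: "'a::real_normed_vector set \<Rightarrow> 'a set" where
  "conev D = {x. x \<noteq> 0 \<and> sgn x \<in> D}"

lemma gfun_measurable[measurable]: "(gfun :: 'a::euclidean_space \<Rightarrow> real) \<in> borel_measurable borel"
  unfolding gfun_def by measurable

lemma conev_sets[measurable]: "D \<in> sets borel \<Longrightarrow> conev (D :: 'a::euclidean_space set) \<in> sets borel"
proof -
  assume D: "D \<in> sets borel"
  have "conev D = (sgn -` D \<inter> space borel) - {0}" by (auto simp: conev_def)
  moreover have "sgn -` D \<inter> space borel \<in> sets borel" by (rule measurable_sets[OF borel_measurable_sgn D])
  ultimately show ?thesis by auto
qed

lemma gfun_pos: "0 < gfun x" by (simp add: gfun_def)
lemma gfun_le1: "gfun x \<le> 1" by (simp add: gfun_def)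

lemma gfun_le_min: assumes "x \<noteq> 0" shows "gfun x \<le> min 1 ((norm x)\<^sup>2)"
proof -
  let ?u = "1 / (norm x)\<^sup>2"
  have u: "0 < ?u" using assms by simp
  have "?u < exp ?u" using exp_ge_add_one_self[of ?u] by linarith
  then have "1 / exp ?u < 1 / ?u" using u by (intro divide_strict_left_mono) auto
  then have "gfun x \<le> (norm x)\<^sup>2" unfolding gfun_def using assms by (simp add: exp_minus inverse_eq_divide)
  then show ?thesis using gfun_le1 by simp
qed

lemma nn_distr_density:
  fixes \<nu> :: "'a measure"
  assumes f[measurable]: "f \<in> borel_measurable \<nu>" and g[measurable]: "g \<in> \<nu> \<rightarrow>\<^sub>M N"
    and phi[measurable]: "phi \<in> borel_measurable N"
  shows "(\<integral>\<^sup>+ y. phi y \<partial>distr (density \<nu> f) N g) = (\<integral>\<^sup>+ x. f x * phi (g x) \<partial>\<nu>)"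
proof -
  have g': "g \<in> density \<nu> f \<rightarrow>\<^sub>M N" using g by simp
  have "(\<integral>\<^sup>+ y. phi y \<partial>distr (density \<nu> f) N g) = (\<integral>\<^sup>+ x. phi (g x) \<partial>density \<nu> f)"
    by (rule nn_integral_distr[OF g']) simp
  also have "\<dots> = (\<integral>\<^sup>+ x. f x * phi (g x) \<partial>\<nu>)"
    by (rule nn_integral_density) measurable
  finally show ?thesis .
qed

lemma cone_upsilon:
  fixes \<nu> :: "'a::euclidean_space measure"
  assumes sf: "sigma_finite_measure \<nu>" and sets: "sets \<nu> = sets borel" and D: "D \<in> sets borel" and r: "0 < r"
  shows "upsilon \<nu> (conev D \<inter> {y. r < norm y}) =
     (\<integral>\<^sup>+ x. indicator (conev D) x * ennreal (exp (- (r\<^sup>2 / (norm x)\<^sup>2))) \<partial>\<nu>)"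
proof -
  have B: "conev D \<inter> {y. r < norm y} \<in> sets borel" using D by measurable
  show ?thesis unfolding upsilon_tonelli[OF sf sets B]
  proof (rule nn_integral_cong)
    fix x :: 'a
    show "(\<integral>\<^sup>+ t. rho t * indicator (conev D \<inter> {y. r < norm y}) (t *\<^sub>R x) \<partial>lborel) =
          indicator (conev D) x * ennreal (exp (- (r\<^sup>2 / (norm x)\<^sup>2)))"
    proof (cases "x \<in> conev D")
      case True
      then have x0: "x \<noteq> 0" and xD: "sgn x \<in> D" by (auto simp: conev_def)
      have "(\<integral>\<^sup>+ t. rho t * indicator (conev D \<inter> {y. r < norm y}) (t *\<^sub>R x) \<partial>lborel) =
            (\<integral>\<^sup>+ t. rho t * indicator {r / norm x<..} t \<partial>lborel)"
      proof (rule nn_integral_cong)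
        fix t :: real
        show "rho t * indicator (conev D \<inter> {y. r < norm y}) (t *\<^sub>R x) = rho t * indicator {r / norm x<..} t"
        proof (cases "0 < t")
          case True
          have "t *\<^sub>R x \<in> conev D" using True x0 xD by (simp add: conev_def sgn_scaleR)
          moreover have "r < norm (t *\<^sub>R x) \<longleftrightarrow> r / norm x < t"
            using True x0 by (simp add: field_simps)
          ultimately show ?thesis by (simp add: indicator_def)
        next
          case False
          then show ?thesis by (simp add: rho_def)
        qed
      qed
      also have "\<dots> = ennreal (exp (- ((r / norm x)\<^sup>2)))"
        by (rule rho_tail) (use r in simp)
      finally show ?thesis using True by (simp add: power_divide)
    next
      case False
      have "(\<integral>\<^sup>+ t. rho t * indicator (conev D \<inter> {y. r < norm y}) (t *\<^sub>R x) \<partial>lborel) = (\<integral>\<^sup>+ t. (0::ennreal) \<partial>(lborel::real measure))"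
      proof (rule nn_integral_cong)
        fix t :: real
        show "rho t * indicator (conev D \<inter> {y. r < norm y}) (t *\<^sub>R x) = 0"
        proof (cases "0 < t")
          case True
          have "t *\<^sub>R x \<notin> conev D" using True False by (auto simp: conev_def sgn_scaleR)
          then show ?thesis by simp
        next
          case False
          then show ?thesis by (simp add: rho_def)
        qed
      qed
      then show ?thesis using False by simp
    qed
  qed
qed

definition pD :: "'a::euclidean_space measure \<Rightarrow> 'a set \<Rightarrow> real measure" where
  "pD \<nu> D = distr (density \<nu> (\<lambda>x. indicator (conev D) x * ennreal (gfun x))) borel gfun"

lemma pD_nn:
  fixes \<nu> :: "'a::euclidean_space measure"
  assumes sets: "sets \<nu> = sets borel" and D: "D \<in> sets borel" and phi[measurable]: "phi \<in> borel_measurable borel"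
  shows "(\<integral>\<^sup>+ y. phi y \<partial>pD \<nu> D) = (\<integral>\<^sup>+ x. (indicator (conev D) x * ennreal (gfun x)) * phi (gfun x) \<partial>\<nu>)"
  unfolding pD_def
  by (rule nn_distr_density) (use D in \<open>simp_all add: measurable_cong_sets[OF sets refl]\<close>)

lemma pD_moment:
  fixes \<nu> :: "'a::euclidean_space measure"
  assumes sf: "sigma_finite_measure \<nu>" and sets: "sets \<nu> = sets borel" and D: "D \<in> sets borel"
  shows "(\<integral>\<^sup>+ y. ennreal (y^k) \<partial>pD \<nu> D) = upsilon \<nu> (conev D \<inter> {y. sqrt (real k + 1) < norm y})"
proof -
  have "(\<integral>\<^sup>+ y. ennreal (y^k) \<partial>pD \<nu> D) = (\<integral>\<^sup>+ x. (indicator (conev D) x * ennreal (gfun x)) * ennreal (gfun x ^ k) \<partial>\<nu>)"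
    by (rule pD_nn[OF sets D]) measurable
  also have "\<dots> = (\<integral>\<^sup>+ x. indicator (conev D) x * ennreal (exp (- ((sqrt (real k + 1))\<^sup>2 / (norm x)\<^sup>2))) \<partial>\<nu>)"
  proof (rule nn_integral_cong)
    fix x :: 'a
    have "gfun x * gfun x ^ k = gfun x ^ (Suc k)" by simp
    also have "\<dots> = exp (real (Suc k) * (- (1 / (norm x)\<^sup>2)))" unfolding gfun_def by (rule exp_of_nat_mult[symmetric])
    also have "\<dots> = exp (- ((sqrt (real k + 1))\<^sup>2 / (norm x)\<^sup>2))" by (simp add: field_simps)
    finally have e: "gfun x * gfun x ^ k = exp (- ((sqrt (real k + 1))\<^sup>2 / (norm x)\<^sup>2))" .
    have "ennreal (gfun x) * ennreal (gfun x ^ k) = ennreal (gfun x * gfun x ^ k)"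
      by (rule ennreal_mult[symmetric]) (simp_all add: less_imp_le[OF gfun_pos])
    then show "(indicator (conev D) x * ennreal (gfun x)) * ennreal (gfun x ^ k) =
       indicator (conev D) x * ennreal (exp (- ((sqrt (real k + 1))\<^sup>2 / (norm x)\<^sup>2)))"
      unfolding e by (simp add: mult.assoc)
  qed
  also have "\<dots> = upsilon \<nu> (conev D \<inter> {y. sqrt (real k + 1) < norm y})"
    by (rule cone_upsilon[OF sf sets D, symmetric]) simp
  finally show ?thesis .
qed

lemma pD_props:
  fixes \<nu> :: "'a::euclidean_space measure"
  assumes L: "levy_measure \<nu>" and D: "D \<in> sets borel"
  shows "sets (pD \<nu> D) = sets borel" "finite_measure (pD \<nu> D)" "emeasure (pD \<nu> D) (- {0..1}) = 0"
proof -
  have sets: "sets \<nu> = sets borel" and fin: "(\<integral>\<^sup>+ x. ennreal (min 1 ((norm x)\<^sup>2)) \<partial>\<nu>) < \<infinity>"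
    using L unfolding levy_measure_def by auto
  show "sets (pD \<nu> D) = sets borel" by (simp add: pD_def)
  have "emeasure (pD \<nu> D) UNIV = (\<integral>\<^sup>+ y. indicator UNIV y \<partial>pD \<nu> D)" by (simp add: pD_def)
  also have "\<dots> = (\<integral>\<^sup>+ x. (indicator (conev D) x * ennreal (gfun x)) * indicator UNIV (gfun x) \<partial>\<nu>)"
    by (rule pD_nn[OF sets D]) simp
  also have "\<dots> \<le> (\<integral>\<^sup>+ x. ennreal (min 1 ((norm x)\<^sup>2)) \<partial>\<nu>)"
  proof (rule nn_integral_mono)
    fix x :: 'a
    show "indicator (conev D) x * ennreal (gfun x) * indicator UNIV (gfun x) \<le> ennreal (min 1 ((norm x)\<^sup>2))"
    proof (cases "x \<in> conev D")
      case True
      then have "x \<noteq> 0" by (simp add: conev_def)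
      then show ?thesis using True gfun_le_min[of x] by (simp add: ennreal_leI)
    qed simp
  qed
  finally have "emeasure (pD \<nu> D) (space (pD \<nu> D)) \<noteq> \<infinity>" using fin by (auto simp: pD_def top_unique)
  then show "finite_measure (pD \<nu> D)" by (rule finite_measureI)
  have "emeasure (pD \<nu> D) (- {0..1}) = emeasure (density \<nu> (\<lambda>x. indicator (conev D) x * ennreal (gfun x))) (gfun -` (- {0..1}) \<inter> space \<nu>)"
  proof -
    have "gfun \<in> \<nu> \<rightarrow>\<^sub>M borel" unfolding measurable_cong_sets[OF sets refl] by (rule gfun_measurable)
    then have gm: "gfun \<in> density \<nu> (\<lambda>x. indicator (conev D) x * ennreal (gfun x)) \<rightarrow>\<^sub>M borel" by simp
    show ?thesis unfolding pD_def using emeasure_distr[OF gm, of "- {0..1}"] by simp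
  qed
  also have "gfun -` (- {0..1}) \<inter> space \<nu> = {}"
  proof -
    have "gfun x \<in> {0..1}" for x :: 'a using gfun_pos[of x] gfun_le1[of x] by simp
    then show ?thesis by auto
  qed
  finally show "emeasure (pD \<nu> D) (- {0..1}) = 0" by simp
qed



lemma pD_eq:
  fixes \<nu>1 \<nu>2 :: "'a::euclidean_space measure"
  assumes L1: "levy_measure \<nu>1" and L2: "levy_measure \<nu>2"
    and eq: "\<forall>B\<in>sets borel. upsilon \<nu>1 B = upsilon \<nu>2 B" and D: "D \<in> sets borel"
  shows "pD \<nu>1 D = pD \<nu>2 D"
proof (rule moment_unique)
  show "sets (pD \<nu>1 D) = sets borel" "finite_measure (pD \<nu>1 D)" "emeasure (pD \<nu>1 D) (- {0..1}) = 0"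
    using pD_props[OF L1 D] by auto
  show "sets (pD \<nu>2 D) = sets borel" "finite_measure (pD \<nu>2 D)" "emeasure (pD \<nu>2 D) (- {0..1}) = 0"
    using pD_props[OF L2 D] by auto
  fix k :: nat
  have s1: "sets \<nu>1 = sets borel" and s2: "sets \<nu>2 = sets borel" using L1 L2 by (auto simp: levy_measure_def)
  have B: "conev D \<inter> {y::'a. sqrt (real k + 1) < norm y} \<in> sets borel" using D by measurable
  show "(\<integral>\<^sup>+ y. ennreal (y^k) \<partial>pD \<nu>1 D) = (\<integral>\<^sup>+ y. ennreal (y^k) \<partial>pD \<nu>2 D)"
    unfolding pD_moment[OF levy_sigma_finite[OF L1] s1 D] pD_moment[OF levy_sigma_finite[OF L2] s2 D]
    using eq B by blast
qed

definition piM :: "'a::euclidean_space measure \<Rightarrow> (real \<times> 'a) measure" where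
  "piM \<nu> = distr (density \<nu> (\<lambda>x. ennreal (gfun x))) (borel \<Otimes>\<^sub>M borel) (\<lambda>x. (gfun x, sgn x))"

lemma piM_nn:
  fixes \<nu> :: "'a::euclidean_space measure"
  assumes sets: "sets \<nu> = sets borel" and phi: "phi \<in> borel_measurable (borel \<Otimes>\<^sub>M borel)"
  shows "(\<integral>\<^sup>+ p. phi p \<partial>piM \<nu>) = (\<integral>\<^sup>+ x. ennreal (gfun x) * phi (gfun x, sgn x) \<partial>\<nu>)"
  unfolding piM_def
proof (rule nn_distr_density[OF _ _ phi])
  show "(\<lambda>x. ennreal (gfun x)) \<in> borel_measurable \<nu>" unfolding measurable_cong_sets[OF sets refl] by measurable
  show "(\<lambda>x. (gfun x, sgn x)) \<in> \<nu> \<rightarrow>\<^sub>M borel \<Otimes>\<^sub>M borel" unfolding measurable_cong_sets[OF sets refl] by measurable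
qed

lemma AE_nonzero:
  fixes \<nu> :: "'a::euclidean_space measure"
  assumes sets: "sets \<nu> = sets borel" and z: "emeasure \<nu> {0} = 0"
  shows "AE x in \<nu>. x \<noteq> 0"
  by (rule AE_I[where N="{0}"]) (auto simp: z sets)

lemma piM_rect:
  fixes \<nu> :: "'a::euclidean_space measure"
  assumes sets: "sets \<nu> = sets borel" and z: "emeasure \<nu> {0} = 0"
    and a: "a \<in> sets borel" and b: "b \<in> sets borel"
  shows "emeasure (piM \<nu>) (a \<times> b) = emeasure (pD \<nu> b) a"
proof -
  have ab: "a \<times> b \<in> sets (borel \<Otimes>\<^sub>M borel)" using a b by auto
  have "emeasure (piM \<nu>) (a \<times> b) = (\<integral>\<^sup>+ p. indicator (a \<times> b) p \<partial>piM \<nu>)"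
    using ab by (simp add: piM_def)
  also have "\<dots> = (\<integral>\<^sup>+ x. ennreal (gfun x) * indicator (a \<times> b) (gfun x, sgn x) \<partial>\<nu>)"
    by (rule piM_nn[OF sets]) (use ab in simp)
  also have "\<dots> = (\<integral>\<^sup>+ x. (indicator (conev b) x * ennreal (gfun x)) * indicator a (gfun x) \<partial>\<nu>)"
  proof (rule nn_integral_cong_AE)
    show "AE x in \<nu>. ennreal (gfun x) * indicator (a \<times> b) (gfun x, sgn x) =
       (indicator (conev b) x * ennreal (gfun x)) * indicator a (gfun x)"
      using AE_nonzero[OF sets z]
      by eventually_elim (auto simp: conev_def indicator_def)
  qed
  also have "\<dots> = (\<integral>\<^sup>+ y. indicator a y \<partial>pD \<nu> b)"
    by (rule pD_nn[OF sets b, symmetric]) (use a in simp)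
  also have "\<dots> = emeasure (pD \<nu> b) a"
    using a by (simp add: pD_def)
  finally show ?thesis .
qed

lemma piM_eq:
  fixes \<nu>1 \<nu>2 :: "'a::euclidean_space measure"
  assumes L1: "levy_measure \<nu>1" and L2: "levy_measure \<nu>2"
    and eq: "\<forall>B\<in>sets borel. upsilon \<nu>1 B = upsilon \<nu>2 B"
  shows "piM \<nu>1 = piM \<nu>2"
proof -
  have s1: "sets \<nu>1 = sets borel" and s2: "sets \<nu>2 = sets borel"
    and z1: "emeasure \<nu>1 {0} = 0" and z2: "emeasure \<nu>2 {0} = 0"
    using L1 L2 by (auto simp: levy_measure_def)
  let ?E = "{a \<times> b | a b. a \<in> sets (borel::real measure) \<and> b \<in> sets (borel::'a measure)}"
  show ?thesis
  proof (rule measure_eqI_generator_eq[where E="?E" and \<Omega>="space borel \<times> space borel" and A="\<lambda>_. UNIV"])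
    show "Int_stable ?E" by (rule Int_stable_pair_measure_generator)
    show "?E \<subseteq> Pow (space borel \<times> space borel)" by auto
    fix X assume "X \<in> ?E"
    then obtain a b where X: "X = a \<times> b" and a: "a \<in> sets borel" and b: "b \<in> sets borel" by auto
    show "emeasure (piM \<nu>1) X = emeasure (piM \<nu>2) X"
      unfolding X piM_rect[OF s1 z1 a b] piM_rect[OF s2 z2 a b] pD_eq[OF L1 L2 eq b] ..
  next
    show "sets (piM \<nu>1) = sigma_sets (space borel \<times> space borel) ?E"
      by (simp add: piM_def sets_pair_measure)
    show "sets (piM \<nu>2) = sigma_sets (space borel \<times> space borel) ?E"
      by (simp add: piM_def sets_pair_measure)
    show "range (\<lambda>_. UNIV) \<subseteq> ?E" by (auto intro!: exI[of _ UNIV])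
    show "(\<Union>i::nat. UNIV) = space borel \<times> space borel" by simp
    fix i :: nat
    have "emeasure (piM \<nu>1) (UNIV \<times> UNIV) = emeasure (pD \<nu>1 UNIV) UNIV"
      by (rule piM_rect[OF s1 z1]) auto
    moreover have "finite_measure (pD \<nu>1 UNIV)" using pD_props[OF L1] by simp
    ultimately show "emeasure (piM \<nu>1) UNIV \<noteq> \<infinity>"
      by (simp add: finite_measure.emeasure_finite pD_def)
  qed
qed

definition hfun :: "real \<Rightarrow> real" where "hfun y = sqrt (- 1 / ln y)"

lemma hfun_gfun: "x \<noteq> 0 \<Longrightarrow> hfun (gfun x) = norm x"
  by (simp add: hfun_def gfun_def)

lemma nu_from_piM:
  fixes \<nu> :: "'a::euclidean_space measure"
  assumes sets: "sets \<nu> = sets borel" and z: "emeasure \<nu> {0} = 0" and B: "B \<in> sets borel"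
  shows "emeasure \<nu> B = (\<integral>\<^sup>+ p. indicator B (hfun (fst p) *\<^sub>R snd p) * indicator (- {0}) (snd p) * ennreal (1 / fst p) \<partial>piM \<nu>)"
proof -
  have Fm: "(\<lambda>p::real\<times>'a. indicator B (hfun (fst p) *\<^sub>R snd p) * indicator (- {0}) (snd p) * ennreal (1 / fst p))
     \<in> borel_measurable (borel \<Otimes>\<^sub>M borel)"
    unfolding hfun_def using B by measurable
  have "emeasure \<nu> B = (\<integral>\<^sup>+ x. indicator B x \<partial>\<nu>)" using B sets by simp
  also have "\<dots> = (\<integral>\<^sup>+ x. ennreal (gfun x) * (indicator B (hfun (gfun x) *\<^sub>R sgn x) * indicator (- {0}) (sgn x) * ennreal (1 / gfun x)) \<partial>\<nu>)"
  proof (rule nn_integral_cong_AE)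
    show "AE x in \<nu>. indicator B x = ennreal (gfun x) * (indicator B (hfun (gfun x) *\<^sub>R sgn x) * indicator (- {0}) (sgn x) * ennreal (1 / gfun x))"
      using AE_nonzero[OF sets z]
    proof eventually_elim
      fix x :: 'a assume x: "x \<noteq> 0"
      have hx: "hfun (gfun x) *\<^sub>R sgn x = x" using x by (simp add: hfun_gfun sgn_div_norm)
      have "ennreal (gfun x) * ennreal (1 / gfun x) = ennreal (gfun x * (1 / gfun x))"
        by (rule ennreal_mult[symmetric]) (simp_all add: less_imp_le[OF gfun_pos])
      also have "\<dots> = 1" using gfun_pos[of x] by simp
      finally have e: "ennreal (gfun x) * ennreal (1 / gfun x) = 1" .
      show "indicator B x = ennreal (gfun x) * (indicator B (hfun (gfun x) *\<^sub>R sgn x) * indicator (- {0}) (sgn x) * ennreal (1 / gfun x))"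
      proof -
        have si: "indicator (- {0}) (sgn x) = (1::ennreal)" using x by (simp add: sgn_zero_iff)
        have "ennreal (gfun x) * (indicator B x * 1 * ennreal (1 / gfun x)) =
              indicator B x * (ennreal (gfun x) * ennreal (1 / gfun x))" by (simp add: ac_simps)
        then show ?thesis unfolding hx si e by simp
      qed
    qed
  qed
  also have "\<dots> = (\<integral>\<^sup>+ p. indicator B (hfun (fst p) *\<^sub>R snd p) * indicator (- {0}) (snd p) * ennreal (1 / fst p) \<partial>piM \<nu>)"
    using piM_nn[OF sets Fm] by simp
  finally show ?thesis .
qed

lemma part2:
  fixes \<nu>1 \<nu>2 :: "'a::euclidean_space measure"
  assumes L1: "levy_measure \<nu>1" and L2: "levy_measure \<nu>2"
    and eq: "\<forall>B\<in>sets borel. upsilon \<nu>1 B = upsilon \<nu>2 B"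
  shows "\<nu>1 = \<nu>2"
proof (rule measure_eqI)
  have s1: "sets \<nu>1 = sets borel" and s2: "sets \<nu>2 = sets borel"
    and z1: "emeasure \<nu>1 {0} = 0" and z2: "emeasure \<nu>2 {0} = 0"
    using L1 L2 by (auto simp: levy_measure_def)
  show "sets \<nu>1 = sets \<nu>2" using s1 s2 by simp
  fix B assume "B \<in> sets \<nu>1"
  then have B: "B \<in> sets borel" using s1 by simp
  show "emeasure \<nu>1 B = emeasure \<nu>2 B"
    unfolding nu_from_piM[OF s1 z1 B] nu_from_piM[OF s2 z2 B] piM_eq[OF L1 L2 eq] ..
qed

theorem proposition3p6:
  fixes \<nu> :: "'a::euclidean_space measure"
  assumes "sets \<nu> = sets borel" and "emeasure \<nu> {0} = 0"
  shows "(upsilon_definable \<nu> \<longleftrightarrow> levy_measure \<nu>) \<and>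
    (\<forall>\<nu>1 \<nu>2 :: 'a measure. levy_measure \<nu>1 \<and> levy_measure \<nu>2 \<and>
        (\<forall>B\<in>sets borel. upsilon \<nu>1 B = upsilon \<nu>2 B) \<longrightarrow> \<nu>1 = \<nu>2)"
  using part1[OF assms] part2 by blast


end
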